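(* For both the overlap preference model and the cost preference model, and for every pair $\langle R,F\rangle$ of a shortlisting rule $R$ and an allocation rule $F$: (i) if $\langle R,F\rangle$ is R-FSSP-O then it is R-FSSP-A and R-FSSP-P; (ii) if $\langle R,F\rangle$ is U-FSSP-O then it is U-FSSP-A and U-FSSP-P; (iii) for each type of manipulation X $\in\{$P, O, A$\}$, if $\langle R,F\rangle$ is R-FSSP-X then it is U-FSSP-X.
   Context: Let $\mathbb{P}=\{p_1,\dots,p_m\}$ be a finite set of projects, $c:\mathbb{P}\to\mathbb{N}$ a cost function with $c(P)=\sum_{p\in P}c(p)$, $B\in\mathbb{N}$ a budget with $c(p)\le B$ for all $p$; agents $\mathcal{N}=\{1,\dots,n\}$. Tie-breaking: for nonempty $P\subseteq\mathbb{P}$, $T(P)$ is its lowest-index project; for a nonempty family $\mathfrak{P}$ of subsets of $\mathbb{P}$, $T(\mathfrak{P})$ is the unique $P\in\mathfrak{P}$ such that for all $P'\in\mathfrak{P}\setminus\{P\}$ the lowest-index project of $(P\setminus P')\cup(P'\setminus P)$ lies in $P$. Greedy selection $\mathit{GREED}(P,\gg)$, for $P\subseteq\mathbb{P}$ and a strict linear order $\gg$ on $P$, examines projects in the order $\gg$ and selects a project iff doing so keeps the total cost of selected projects at most $B$. Shortlisting stage: a shortlisting instance is $\langle\mathbb{P},c,B\rangle$; a shortlisting profile is $\boldsymbol{P}=(P_1,\dots,P_n)$, $P_i\subseteq\mathbb{P}$, $\bigcup\boldsymbol{P}=P_1\cup\dots\cup P_n$; $(\boldsymbol{P}_{-i},P_i')$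 is $\boldsymbol{P}$ with $P_i$ replaced by $P_i'$; a shortlisting rule $R$ outputs $R(I,\boldsymbol{P})\subseteq\bigcup\boldsymbol{P}$. Each agent $i$ has an awareness set $C_i\subseteq\mathbb{P}$; $\boldsymbol{C}=(C_1,\dots,C_n)$. Allocation stage: an allocation instance is $\langle\mathcal{P},c,B\rangle$ with $\mathcal{P}\subseteq\mathbb{P}$; a profile is $\boldsymbol{A}=(A_1,\dots,A_n)$ with $A_i\subseteq\mathcal{P}$; a set $A\subseteq\mathcal{P}$ is feasible if $c(A)\le B$; an allocation rule $F$ maps $(I,\boldsymbol{A})$ to a feasible $F(I,\boldsymbol{A})\subseteq\mathcal{P}$. Preferences: each agent $i$ has a strict linear order $\rhd_i$ on $\mathbb{P}$; for $\mathcal{P}\subseteq\mathbb{P}$, $\mathit{top}_i(\mathcal{P})=\mathit{GREED}(\mathcal{P},\rhd_i|_{\mathcal{P}})$ and $\boldsymbol{top}(\mathcal{P})=(\mathit{top}_1(\mathcal{P}),\dots,\mathit{top}_n(\mathcal{P}))$. For a set $P\subseteq\mathbb{P}$, under the overlap model $A\succeq_P A'$ iff $|A\cap P|\ge|A'\cap P|$; under the cost model $A\succeq_P A'$ iff $c(A\cap P)\ge c(A'\cap P)$; $\succ_P$ is the strict part. For a relation $\succ$ and a family $\mathfrak{P}$, $\mathit{best}(\succ,\mathfrak{P})$ is the set of elements of $\mathfrak{P}$ undominated w.r.t. $\succ$. Best response: for an allocation instance $I=\langle\mathcal{P},c,B\rangle$, profile $\boldsymbol{A}$ and agent $i$, $A_i^\star(I,\boldsymbol{A})=T(\mathit{best}(\succ_{\mathit{top}_i(\mathcal{P})},\{F(I,(\boldsymbol{A}_{-i},A_i'))\mid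 A_i'\subseteq\mathcal{P}\}))$ and $F^\star(I,\boldsymbol{A})=F(I,(\boldsymbol{A}_{-i},A_i^\star(I,\boldsymbol{A})))$. Manipulation: given $R$, $F$, a shortlisting instance $I_1$, profile $\boldsymbol{P}$, agent $i$ and $P_i'\subseteq\mathbb{P}$, let $\mathcal{P}=R(I_1,\boldsymbol{P})$, $\mathcal{P}'=R(I_1,(\boldsymbol{P}_{-i},P_i'))$, $I_2=\langle\mathcal{P},c,B\rangle$, $I_2'=\langle\mathcal{P}',c,B\rangle$, and $Q=\mathit{top}_i(\mathcal{P}\cup\mathcal{P}')$. $P_i'$ is a successful pessimistic manipulation if for all profiles $\boldsymbol{A}$ on $\mathcal{P}$ and $\boldsymbol{A}'$ on $\mathcal{P}'$, $F^\star(I_2',\boldsymbol{A}')\succeq_Q F^\star(I_2,\boldsymbol{A})$, strictly for at least one pair; a successful optimistic manipulation if for at least one $\boldsymbol{A}$ on $\mathcal{P}$ and one $\boldsymbol{A}'$ on $\mathcal{P}'$, $F^\star(I_2',\boldsymbol{A}')\succ_Q F^\star(I_2,\boldsymbol{A})$; a successful anticipative manipulation if $F^\star(I_2',\boldsymbol{top}(\mathcal{P}'))\succ_Q F^\star(I_2,\boldsymbol{top}(\mathcal{P}))$. FSSP: for a preference model, $\langle R,F\rangle$ is R-FSSP w.r.t. a manipulation type if for every shortlisting instance, every awareness profile $\boldsymbol{C}$, every shortlisting profile $\boldsymbol{P}$ with $P_{i'}\subseteq C_{i'}$ for all $i'$, and every agent $i$, there is no $P_i'\subseteq C_i$ such that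 submitting $P_i'$ instead of $\mathit{top}_i(C_i)$ (i.e., moving from $(\boldsymbol{P}_{-i},\mathit{top}_i(C_i))$ to $(\boldsymbol{P}_{-i},P_i')$) is a successful manipulation of that type for $i$. $\langle R,F\rangle$ is U-FSSP w.r.t. that type if the same holds with $P_i'\subseteq C_i\cup\bigcup\boldsymbol{P}$ and with $\mathit{top}_i(C_i\cup\bigcup\boldsymbol{P})$ in place of $\mathit{top}_i(C_i)$. Suffixes -P, -O, -A denote pessimistic, optimistic and anticipative manipulation. *)

theory Defs
  imports Main
begin

(* Projects are natural numbers; the index order of projects is the order on nat.  Profiles over the agents 1..n are
   lists of length n (agent i is list position i). *)

datatype pref_model = Overlap | Cost
datatype manip_type = Pess | Opt | Antic

type_synonym rule = "nat set \<Rightarrow> (nat \<Rightarrow> nat) \<Rightarrow> nat \<Rightarrow> nat set list \<Rightarrow> nat set"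

definition valid_instance :: "nat set \<Rightarrow> (nat \<Rightarrow> nat) \<Rightarrow> nat \<Rightarrow> bool" where
  "valid_instance Pr c B \<longleftrightarrow> finite Pr \<and> (\<forall>p\<in>Pr. c p \<le> B)"

(* the elements of P listed along the strict linear order r (best first) *)
definition ord_list :: "nat rel \<Rightarrow> nat set \<Rightarrow> nat list" where
  "ord_list r P = (SOME xs. distinct xs \<and> set xs = P \<and> sorted_wrt (\<lambda>x y. (x, y) \<in> r) xs)"

fun greedy_aux :: "(nat \<Rightarrow> nat) \<Rightarrow> nat \<Rightarrow> nat list \<Rightarrow> nat set \<Rightarrow> nat set" where
  "greedy_aux c B [] S = S"
| "greedy_aux c B (x # xs) S = greedy_aux c B xs (if sum c S + c x \<le> B then insert x S else S)"

definition GREED :: "(nat \<Rightarrow> nat) \<Rightarrow> nat \<Rightarrow> nat set \<Rightarrow> nat rel \<Rightarrow> nat set" where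
  "GREED c B P r = greedy_aux c B (ord_list (r \<inter> (P \<times> P)) P) {}"

definition top :: "(nat \<Rightarrow> nat) \<Rightarrow> nat \<Rightarrow> nat rel \<Rightarrow> nat set \<Rightarrow> nat set" where
  "top c B r P = GREED c B P r"

definition util :: "pref_model \<Rightarrow> (nat \<Rightarrow> nat) \<Rightarrow> nat set \<Rightarrow> nat set \<Rightarrow> nat" where
  "util m c Q A = (case m of Overlap \<Rightarrow> card (A \<inter> Q) | Cost \<Rightarrow> sum c (A \<inter> Q))"

definition weak_pref :: "pref_model \<Rightarrow> (nat \<Rightarrow> nat) \<Rightarrow> nat set \<Rightarrow> nat set \<Rightarrow> nat set \<Rightarrow> bool" where
  "weak_pref m c Q A A' \<longleftrightarrow> util m c Q A \<ge> util m c Q A'"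

definition strict_pref :: "pref_model \<Rightarrow> (nat \<Rightarrow> nat) \<Rightarrow> nat set \<Rightarrow> nat set \<Rightarrow> nat set \<Rightarrow> bool" where
  "strict_pref m c Q A A' \<longleftrightarrow> weak_pref m c Q A A' \<and> \<not> weak_pref m c Q A' A"

definition best :: "(nat set \<Rightarrow> nat set \<Rightarrow> bool) \<Rightarrow> nat set set \<Rightarrow> nat set set" where
  "best succ Fam = {A \<in> Fam. \<not> (\<exists>A'\<in>Fam. succ A' A)}"

definition tb_family :: "nat set set \<Rightarrow> nat set" where
  "tb_family Fam = (THE P. P \<in> Fam \<and> (\<forall>P'\<in>Fam - {P}. Min ((P - P') \<union> (P' - P)) \<in> P))"

definition is_shortlisting_rule :: "rule \<Rightarrow> bool" where
  "is_shortlisting_rule R \<longleftrightarrow> (\<forall>Pr c B Ps. valid_instance Pr c B \<longrightarrow> (\<forall>P\<in>set Ps. P \<subseteq> Pr)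
      \<longrightarrow> R Pr c B Ps \<subseteq> \<Union>(set Ps))"

definition is_allocation_rule :: "rule \<Rightarrow> bool" where
  "is_allocation_rule F \<longleftrightarrow> (\<forall>P c B As. valid_instance P c B \<longrightarrow> (\<forall>A\<in>set As. A \<subseteq> P)
      \<longrightarrow> F P c B As \<subseteq> P \<and> sum c (F P c B As) \<le> B)"

definition profiles_on :: "nat set \<Rightarrow> nat \<Rightarrow> nat set list set" where
  "profiles_on P n = {As. length As = n \<and> (\<forall>A\<in>set As. A \<subseteq> P)}"

definition best_resp :: "pref_model \<Rightarrow> rule \<Rightarrow> nat set \<Rightarrow> (nat \<Rightarrow> nat) \<Rightarrow> nat
    \<Rightarrow> nat rel list \<Rightarrow> nat \<Rightarrow> nat set list \<Rightarrow> nat set" where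
  "best_resp m F P c B prefs i As =
     tb_family (best (strict_pref m c (top c B (prefs ! i) P))
                     {F P c B (As[i := A']) | A'. A' \<subseteq> P})"

definition F_star :: "pref_model \<Rightarrow> rule \<Rightarrow> nat set \<Rightarrow> (nat \<Rightarrow> nat) \<Rightarrow> nat
    \<Rightarrow> nat rel list \<Rightarrow> nat \<Rightarrow> nat set list \<Rightarrow> nat set" where
  "F_star m F P c B prefs i As = F P c B (As[i := best_resp m F P c B prefs i As])"

definition successful_manip :: "pref_model \<Rightarrow> manip_type \<Rightarrow> rule \<Rightarrow> rule \<Rightarrow> nat set
    \<Rightarrow> (nat \<Rightarrow> nat) \<Rightarrow> nat \<Rightarrow> nat rel list \<Rightarrow> nat set list \<Rightarrow> nat \<Rightarrow> nat set \<Rightarrow> bool" where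
  "successful_manip m X R F Pr c B prefs Ps i P' =
    (let P1 = R Pr c B Ps; P2 = R Pr c B (Ps[i := P']); n = length Ps;
         Q = top c B (prefs ! i) (P1 \<union> P2);
         G1 = F_star m F P1 c B prefs i; G2 = F_star m F P2 c B prefs i
     in case X of
       Pess \<Rightarrow> (\<forall>A\<in>profiles_on P1 n. \<forall>A'\<in>profiles_on P2 n. weak_pref m c Q (G2 A') (G1 A))
              \<and> (\<exists>A\<in>profiles_on P1 n. \<exists>A'\<in>profiles_on P2 n. strict_pref m c Q (G2 A') (G1 A))
     | Opt \<Rightarrow> (\<exists>A\<in>profiles_on P1 n. \<exists>A'\<in>profiles_on P2 n. strict_pref m c Q (G2 A') (G1 A))
     | Antic \<Rightarrow> strict_pref m c Q (G2 (map (\<lambda>r. top c B r P2) prefs))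
                                     (G1 (map (\<lambda>r. top c B r P1) prefs)))"

definition R_FSSP :: "pref_model \<Rightarrow> manip_type \<Rightarrow> rule \<Rightarrow> rule \<Rightarrow> bool" where
  "R_FSSP m X R F \<longleftrightarrow>
    (\<forall>Pr c B prefs Cs Ps i P'.
       valid_instance Pr c B \<longrightarrow> length prefs = length Ps \<longrightarrow> length Cs = length Ps \<longrightarrow>
       (\<forall>r\<in>set prefs. strict_linear_order_on Pr r) \<longrightarrow>
       (\<forall>j<length Ps. Cs ! j \<subseteq> Pr \<and> Ps ! j \<subseteq> Cs ! j) \<longrightarrow>
       i < length Ps \<longrightarrow> P' \<subseteq> Cs ! i \<longrightarrow>
       \<not> successful_manip m X R F Pr c B prefs (Ps[i := top c B (prefs ! i) (Cs ! i)]) i P')"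

definition U_FSSP :: "pref_model \<Rightarrow> manip_type \<Rightarrow> rule \<Rightarrow> rule \<Rightarrow> bool" where
  "U_FSSP m X R F \<longleftrightarrow>
    (\<forall>Pr c B prefs Cs Ps i P'.
       valid_instance Pr c B \<longrightarrow> length prefs = length Ps \<longrightarrow> length Cs = length Ps \<longrightarrow>
       (\<forall>r\<in>set prefs. strict_linear_order_on Pr r) \<longrightarrow>
       (\<forall>j<length Ps. Cs ! j \<subseteq> Pr \<and> Ps ! j \<subseteq> Cs ! j) \<longrightarrow>
       i < length Ps \<longrightarrow> P' \<subseteq> Cs ! i \<union> \<Union>(set Ps) \<longrightarrow>
       \<not> successful_manip m X R F Pr c B prefs
           (Ps[i := top c B (prefs ! i) (Cs ! i \<union> \<Union>(set Ps))]) i P')"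

end

theory Submission
  imports Defs
begin

lemma ex_sorted:
  assumes "finite P" "trans s" "irrefl s" "total_on P s" "s \<subseteq> P \<times> P"
  shows "\<exists>xs. distinct xs \<and> set xs = P \<and> sorted_wrt (\<lambda>x y. (x,y)\<in>s) xs"
  using assms
proof (induction P arbitrary: s rule: finite_psubset_induct)
  case (psubset P)
  show ?case
  proof (cases "P = {}")
    case True then show ?thesis by auto
  next
    case False
    have fin: "finite s" using psubset.prems(4) psubset.hyps(1)
      by (meson finite_SigmaI finite_subset)
    have "acyclic s" using psubset.prems(1,2) unfolding acyclic_def irrefl_def by simp
    then have wf: "wf s" using fin finite_acyclic_wf by blast
    then obtain x where x: "x \<in> P" "\<And>y. (y, x) \<in> s \<Longrightarrow> y \<notin> P"
      using False wfE_min' by blast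
    have xall: "\<forall>y\<in>P-{x}. (x,y)\<in>s" using x psubset.prems(3) unfolding total_on_def by blast
    define s' where "s' = s \<inter> ((P-{x}) \<times> (P-{x}))"
    have "trans s'"
    proof (rule transI)
      fix a b d assume "(a,b)\<in>s'" "(b,d)\<in>s'"
      then show "(a,d)\<in>s'" using transD[OF psubset.prems(1), of a b d] unfolding s'_def by blast
    qed
    moreover have "irrefl s'" using psubset.prems(2) unfolding s'_def irrefl_def by blast
    moreover have "total_on (P-{x}) s'" using psubset.prems(3) unfolding s'_def total_on_def by blast
    moreover have "P - {x} \<subset> P" using x by blast
    moreover have "s' \<subseteq> (P-{x}) \<times> (P-{x})" unfolding s'_def by blast
    ultimately have "\<exists>ys. distinct ys \<and> set ys = P-{x} \<and> sorted_wrt (\<lambda>x y. (x,y)\<in>s') ys"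
      using psubset.IH[of "P-{x}" s'] by simp
    then obtain ys where ys: "distinct ys" "set ys = P-{x}" "sorted_wrt (\<lambda>x y. (x,y)\<in>s') ys"
      by blast
    have so: "sorted_wrt (\<lambda>x y. (x,y)\<in>s) ys"
      using sorted_wrt_mono_rel[OF _ ys(3), of "\<lambda>x y. (x,y)\<in>s"] by (auto simp: s'_def)
    have d: "distinct (x#ys)" using ys(2) ys(1) by simp
    have st: "set (x#ys) = P" using ys(2) x(1) by auto
    have sw: "sorted_wrt (\<lambda>x y. (x,y)\<in>s) (x#ys)" using so xall ys(2) by simp
    show ?thesis using d st sw by blast
  qed
qed

lemma greedy_aux_sub: "greedy_aux c B xs S \<subseteq> set xs \<union> S"
proof (induction xs arbitrary: S)
  case Nil then show ?case by simp
next
  case (Cons a xs)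
  have "greedy_aux c B xs (if sum c S + c a \<le> B then insert a S else S) \<subseteq> set xs \<union> (if sum c S + c a \<le> B then insert a S else S)"
    by (rule Cons.IH)
  then show ?case by auto
qed

lemma top_sub:
  assumes "finite P" "P \<subseteq> Pr" "strict_linear_order_on Pr r"
  shows "top c B r P \<subseteq> P"
proof -
  let ?s = "r \<inter> (P \<times> P)"
  have "\<exists>xs. distinct xs \<and> set xs = P \<and> sorted_wrt (\<lambda>x y. (x,y)\<in>?s) xs"
    apply (rule ex_sorted)
    using assms unfolding strict_linear_order_on_def trans_def irrefl_def total_on_def
    by blast+
  then have "set (ord_list ?s P) = P" unfolding ord_list_def by (rule someI2_ex) blast
  then show ?thesis unfolding top_def GREED_def using greedy_aux_sub by fastforce
qed

lemma pess_opt: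
  "successful_manip m Pess R F Pr c B prefs Ps i P' \<Longrightarrow> successful_manip m Opt R F Pr c B prefs Ps i P'"
  unfolding successful_manip_def Let_def manip_type.case by blast

lemma prof_top:
  assumes "valid_instance Pr c B" "P \<subseteq> Pr" "\<forall>r\<in>set prefs. strict_linear_order_on Pr r"
    "length prefs = n"
  shows "map (\<lambda>r. top c B r P) prefs \<in> profiles_on P n"
proof -
  have fin: "finite P" using assms(1,2) unfolding valid_instance_def by (meson finite_subset)
  have "\<forall>A\<in>set (map (\<lambda>r. top c B r P) prefs). A \<subseteq> P"
  proof
    fix A assume "A \<in> set (map (\<lambda>r. top c B r P) prefs)"
    then obtain r where r: "r \<in> set prefs" "A = top c B r P" by auto
    show "A \<subseteq> P" using top_sub[OF fin assms(2), of r c B] r assms(3) by blast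
  qed
  then show ?thesis unfolding profiles_on_def using assms(4) by simp
qed

lemma shortlist_sub:
  assumes R: "is_shortlisting_rule R" and v: "valid_instance Pr c B"
    and sub: "\<forall>P\<in>set Ps. P \<subseteq> Pr"
  shows "R Pr c B Ps \<subseteq> Pr"
proof -
  have "R Pr c B Ps \<subseteq> \<Union>(set Ps)"
    using R v sub unfolding is_shortlisting_rule_def by blast
  then show ?thesis using sub by blast
qed

lemma antic_opt:
  assumes R: "is_shortlisting_rule R" and v: "valid_instance Pr c B"
    and len: "length prefs = length Ps"
    and lin: "\<forall>r\<in>set prefs. strict_linear_order_on Pr r"
    and sub: "\<forall>P\<in>set Ps. P \<subseteq> Pr" and P': "P' \<subseteq> Pr"
    and a: "successful_manip m Antic R F Pr c B prefs Ps i P'"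
  shows "successful_manip m Opt R F Pr c B prefs Ps i P'"
proof -
  let ?P1 = "R Pr c B Ps" and ?P2 = "R Pr c B (Ps[i := P'])"
  have s1: "?P1 \<subseteq> Pr" using shortlist_sub[OF R v sub] .
  have "set (Ps[i := P']) \<subseteq> insert P' (set Ps)" by (rule set_update_subset_insert)
  then have "\<forall>P\<in>set (Ps[i := P']). P \<subseteq> Pr" using sub P' by blast
  then have s2: "?P2 \<subseteq> Pr" using shortlist_sub[OF R v] by blast
  have m1: "map (\<lambda>r. top c B r ?P1) prefs \<in> profiles_on ?P1 (length Ps)"
    using prof_top[OF v s1 lin len] .
  have m2: "map (\<lambda>r. top c B r ?P2) prefs \<in> profiles_on ?P2 (length Ps)"
    using prof_top[OF v s2 lin len] .
  have st: "strict_pref m c (top c B (prefs ! i) (?P1 \<union> ?P2))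
      (F_star m F ?P2 c B prefs i (map (\<lambda>r. top c B r ?P2) prefs))
      (F_star m F ?P1 c B prefs i (map (\<lambda>r. top c B r ?P1) prefs))"
    using a unfolding successful_manip_def Let_def manip_type.case .
  show ?thesis unfolding successful_manip_def Let_def manip_type.case
    using m1 m2 st by blast
qed

lemma top_sub_gen:
  assumes "valid_instance Pr c B" "P \<subseteq> Pr" "strict_linear_order_on Pr r"
  shows "top c B r P \<subseteq> Pr"
  using top_sub[of P Pr r c B] assms unfolding valid_instance_def
  by (meson finite_subset order_trans)

lemma R_part:
  assumes R: "is_shortlisting_rule R" and o: "R_FSSP m Opt R F"
  shows "R_FSSP m Antic R F \<and> R_FSSP m Pess R F"
proof -
  have "\<not> successful_manip m X R F Pr c B prefs (Ps[i := top c B (prefs ! i) (Cs ! i)]) i P'"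
    if X: "X \<in> {Antic, Pess}" and
     h: "valid_instance Pr c B" "length prefs = length Ps" "length Cs = length Ps"
       "\<forall>r\<in>set prefs. strict_linear_order_on Pr r"
       "\<forall>j<length Ps. Cs ! j \<subseteq> Pr \<and> Ps ! j \<subseteq> Cs ! j"
       "i < length Ps" "P' \<subseteq> Cs ! i" for X Pr c B prefs Cs Ps i P'
  proof
    assume a: "successful_manip m X R F Pr c B prefs (Ps[i := top c B (prefs ! i) (Cs ! i)]) i P'"
    have no: "\<not> successful_manip m Opt R F Pr c B prefs (Ps[i := top c B (prefs ! i) (Cs ! i)]) i P'"
      using o[unfolded R_FSSP_def, rule_format, of Pr c B prefs Ps Cs i P'] h by blast
    have ci: "Cs ! i \<subseteq> Pr" using h by blast
    have ri: "strict_linear_order_on Pr (prefs ! i)" using h by auto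
    have t: "top c B (prefs ! i) (Cs ! i) \<subseteq> Pr" using top_sub_gen[OF h(1) ci ri] .
    have ps: "\<forall>P\<in>set Ps. P \<subseteq> Pr" using h(5) by (metis in_set_conv_nth order_trans)
    have "set (Ps[i := top c B (prefs ! i) (Cs ! i)]) \<subseteq> insert (top c B (prefs ! i) (Cs ! i)) (set Ps)"
      by (rule set_update_subset_insert)
    then have sub: "\<forall>P\<in>set (Ps[i := top c B (prefs ! i) (Cs ! i)]). P \<subseteq> Pr"
      using t ps by blast
    show False
    proof (cases "X = Antic")
      case True
      have p': "P' \<subseteq> Pr" using h(7) ci by blast
      have len': "length prefs = length (Ps[i := top c B (prefs ! i) (Cs ! i)])" using h(2) by simp
      show ?thesis using antic_opt[OF R h(1) len' h(4) sub p', of m F i] a[unfolded True] no by blast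
    next
      case False
      then show ?thesis using X a no pess_opt by auto
    qed
  qed
  then show ?thesis unfolding R_FSSP_def by blast
qed

lemma U_part:
  assumes R: "is_shortlisting_rule R" and o: "U_FSSP m Opt R F"
  shows "U_FSSP m Antic R F \<and> U_FSSP m Pess R F"
proof -
  have "\<not> successful_manip m X R F Pr c B prefs (Ps[i := top c B (prefs ! i) (Cs ! i \<union> \<Union>(set Ps))]) i P'"
    if X: "X \<in> {Antic, Pess}" and
     h: "valid_instance Pr c B" "length prefs = length Ps" "length Cs = length Ps"
       "\<forall>r\<in>set prefs. strict_linear_order_on Pr r"
       "\<forall>j<length Ps. Cs ! j \<subseteq> Pr \<and> Ps ! j \<subseteq> Cs ! j"
       "i < length Ps" "P' \<subseteq> Cs ! i \<union> \<Union>(set Ps)" for X Pr c B prefs Cs Ps i P'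
  proof
    assume a: "successful_manip m X R F Pr c B prefs (Ps[i := top c B (prefs ! i) (Cs ! i \<union> \<Union>(set Ps))]) i P'"
    have no: "\<not> successful_manip m Opt R F Pr c B prefs (Ps[i := top c B (prefs ! i) (Cs ! i \<union> \<Union>(set Ps))]) i P'"
      using o[unfolded U_FSSP_def, rule_format, of Pr c B prefs Ps Cs i P'] h by blast
    have ps: "\<forall>P\<in>set Ps. P \<subseteq> Pr" using h(5) by (metis in_set_conv_nth order_trans)
    have ci: "Cs ! i \<union> \<Union>(set Ps) \<subseteq> Pr" using h ps by blast
    have ri: "strict_linear_order_on Pr (prefs ! i)" using h by auto
    have t: "top c B (prefs ! i) (Cs ! i \<union> \<Union>(set Ps)) \<subseteq> Pr" using top_sub_gen[OF h(1) ci ri] .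
    have "set (Ps[i := top c B (prefs ! i) (Cs ! i \<union> \<Union>(set Ps))]) \<subseteq> insert (top c B (prefs ! i) (Cs ! i \<union> \<Union>(set Ps))) (set Ps)"
      by (rule set_update_subset_insert)
    then have sub: "\<forall>P\<in>set (Ps[i := top c B (prefs ! i) (Cs ! i \<union> \<Union>(set Ps))]). P \<subseteq> Pr"
      using t ps by blast
    have p': "P' \<subseteq> Pr" using h(7) ci by blast
    show False
    proof (cases "X = Antic")
      case True
      have len': "length prefs = length (Ps[i := top c B (prefs ! i) (Cs ! i \<union> \<Union>(set Ps))])" using h(2) by simp
      show ?thesis using antic_opt[OF R h(1) len' h(4) sub p', of m F i] a[unfolded True] no by blast
    next
      case False
      then show ?thesis using X a no pess_opt by auto
    qed
  qed
  then show ?thesis unfolding U_FSSP_def by blast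
qed

lemma RU_part:
  assumes r: "R_FSSP m X R F"
  shows "U_FSSP m X R F"
  unfolding U_FSSP_def
proof (intro allI impI)
  fix Pr c B prefs Cs Ps i P'
  assume h: "valid_instance Pr c B" "length prefs = length Ps" "length Cs = length Ps"
       "\<forall>r\<in>set prefs. strict_linear_order_on Pr r"
       "\<forall>j<length Ps. Cs ! j \<subseteq> Pr \<and> Ps ! j \<subseteq> Cs ! j"
       "i < length Ps" "P' \<subseteq> Cs ! i \<union> \<Union>(set Ps)"
  define Cs' where "Cs' = Cs[i := Cs ! i \<union> \<Union>(set Ps)]"
  have ps: "\<forall>P\<in>set Ps. P \<subseteq> Pr" using h(5) by (metis in_set_conv_nth order_trans)
  have l: "length Cs' = length Ps" using h unfolding Cs'_def by simp
  have ci: "Cs' ! i = Cs ! i \<union> \<Union>(set Ps)" using h unfolding Cs'_def by simp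
  have j: "\<forall>j<length Ps. Cs' ! j \<subseteq> Pr \<and> Ps ! j \<subseteq> Cs' ! j"
  proof (intro allI impI)
    fix j assume "j < length Ps"
    show "Cs' ! j \<subseteq> Pr \<and> Ps ! j \<subseteq> Cs' ! j"
    proof (cases "j = i")
      case True
      have "Cs ! i \<subseteq> Pr" "Ps ! i \<subseteq> Cs ! i" using h(5) h(6) by blast+
      moreover have "\<Union>(set Ps) \<subseteq> Pr" using ps by blast
      ultimately show ?thesis using ci True by blast
    next
      case False
      then have "Cs' ! j = Cs ! j" unfolding Cs'_def by simp
      then show ?thesis using h(5) \<open>j < length Ps\<close> by simp
    qed
  qed
  show "\<not> successful_manip m X R F Pr c B prefs
           (Ps[i := top c B (prefs ! i) (Cs ! i \<union> \<Union>(set Ps))]) i P'"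
  proof -
    have "P' \<subseteq> Cs' ! i" using h(7) ci by simp
    then have "\<not> successful_manip m X R F Pr c B prefs (Ps[i := top c B (prefs ! i) (Cs' ! i)]) i P'"
      using r[unfolded R_FSSP_def, rule_format, of Pr c B prefs Ps Cs' i P'] h(1,2,4,6) l j
      by blast
    then show ?thesis using ci by simp
  qed
qed

theorem proposition4:
  fixes m :: pref_model and R F :: rule
  assumes "is_shortlisting_rule R" and "is_allocation_rule F"
  shows "(R_FSSP m Opt R F \<longrightarrow> R_FSSP m Antic R F \<and> R_FSSP m Pess R F)
       \<and> (U_FSSP m Opt R F \<longrightarrow> U_FSSP m Antic R F \<and> U_FSSP m Pess R F)
       \<and> (\<forall>X. R_FSSP m X R F \<longrightarrow> U_FSSP m X R F)"
  using R_part[OF assms(1)] U_part[OF assms(1)] RU_part by blast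

end
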